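(* Let $m\in\mathbb{R}$, $b\in(0,1)$, $q\in[0,1)$. Let $L\sim \mathrm{DLap}(b)$ with pmf $p_L(x)=\frac{1-b}{1+b}b^{|x|}$ for $x\in\mathbb{Z}$, let $U\sim\mathrm{Unif}(-1/2,1/2)$, let $G_1,G_2\overset{\text{iid}}{\sim}\mathrm{Geom}(1-b)$ with pmf $p_{G_1}(x)=b^x(1-b)$ for $x\in\{0,1,2,\ldots\}$, and let $N_0\sim\mathrm{Tulap}(m,b,0)$. Then: (1) $L+U+m\overset{d}{=}G_1-G_2+U+m\overset{d}{=}N_0$. (2) Let $N$ be the output of the following sampling procedure with inputs $m,b,q$: (i) draw $G_1,G_2\overset{\text{iid}}{\sim}\mathrm{Geom}(1-b)$ and $U\sim\mathrm{Unif}(-1/2,1/2)$; (ii) set $N=G_1-G_2+U+m$; (iii) if $F_{N_0}(N)<q/2$ or $F_{N_0}(N)>1-q/2$ (where $N_0\sim\mathrm{Tulap}(m,b,0)$), return to step (i); otherwise output $N$. Then $N\sim\mathrm{Tulap}(m,b,q)$. (3) A random variable $N\sim\mathrm{Tulap}(m,b,q)$ is continuous and symmetric about $m$.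
   Context: $[\cdot]:\mathbb{R}\to\mathbb{Z}$ denotes the nearest integer function, with $[z+1/2]$ taken to be the nearest even integer when $z\in\mathbb{Z}$. For $m\in\mathbb{R}$, $b\in(0,1)$, $q\in[0,1)$, the Truncated-Uniform-Laplace distribution is defined as follows: $N_0\sim\mathrm{Tulap}(m,b,0)$ has cdf $F_{N_0}(x)=\frac{b^{-[x-m]}}{1+b}\left(b+(x-m-[x-m]+\tfrac12)(1-b)\right)$ for $x\le[m]$ and $F_{N_0}(x)=1-\frac{b^{[x-m]}}{1+b}\left(b+([x-m]-(x-m)+\tfrac12)(1-b)\right)$ for $x>[m]$; and $N\sim\mathrm{Tulap}(m,b,q)$ has cdf $F_N(x)=\left(\frac{F_{N_0}(x)-q/2}{1-q}\right)I\{q/2\le F_{N_0}(x)\le 1-q/2\}+I\{F_{N_0}(x)>1-q/2\}$. *)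

theory Defs
  imports "HOL-Probability.Probability"
begin

definition nint :: "real \<Rightarrow> int" where
  "nint z = (if z - of_int \<lfloor>z\<rfloor> = 1/2
             then (if even \<lfloor>z\<rfloor> then \<lfloor>z\<rfloor> else \<lfloor>z\<rfloor> + 1)
             else round z)"

definition tulap0_cdf :: "real \<Rightarrow> real \<Rightarrow> real \<Rightarrow> real" where
  "tulap0_cdf m b x =
     (if x \<le> of_int (nint m)
      then b powi (- nint (x - m)) / (1 + b) * (b + (x - m - of_int (nint (x - m)) + 1/2) * (1 - b))
      else 1 - b powi (nint (x - m)) / (1 + b) * (b + (of_int (nint (x - m)) - (x - m) + 1/2) * (1 - b)))"

definition tulap_cdf :: "real \<Rightarrow> real \<Rightarrow> real \<Rightarrow> real \<Rightarrow> real" where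
  "tulap_cdf m b q x =
     (let F0 = tulap0_cdf m b x in
      (if q/2 \<le> F0 \<and> F0 \<le> 1 - q/2 then (F0 - q/2) / (1 - q) else 0)
      + (if F0 > 1 - q/2 then 1 else 0))"

definition dlap_pmf :: "real \<Rightarrow> int pmf" where
  "dlap_pmf b = embed_pmf (\<lambda>x. (1 - b) / (1 + b) * b ^ nat \<bar>x\<bar>)"

definition geom_pmf :: "real \<Rightarrow> nat pmf" where
  "geom_pmf b = geometric_pmf (1 - b)"

definition unif_half :: "real measure" where
  "unif_half = uniform_measure lborel {-1/2<..<1/2}"

definition trial_measure :: "real \<Rightarrow> (nat \<times> nat \<times> real) measure" where
  "trial_measure b = measure_pmf (geom_pmf b) \<Otimes>\<^sub>M (measure_pmf (geom_pmf b) \<Otimes>\<^sub>M unif_half)"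

end

theory Submission
  imports Defs
begin

lemma nint_close: "\<bar>y - real_of_int (nint y)\<bar> \<le> 1/2"
proof -
  have f: "of_int \<lfloor>y\<rfloor> \<le> y" "y < of_int \<lfloor>y\<rfloor> + 1" by linarith+
  show ?thesis
  proof (cases "y - of_int \<lfloor>y\<rfloor> = 1/2")
    case True then show ?thesis unfolding nint_def by auto
  next
    case False
    have "\<bar>y - of_int (round y)\<bar> \<le> 1/2"
      using of_int_round_ge[of y] of_int_round_le[of y] by linarith
    then show ?thesis using False unfolding nint_def by auto
  qed
qed

lemma nint_half: "nint (1/2) = 0"
  unfolding nint_def by simp

definition Fk :: "real \<Rightarrow> int \<Rightarrow> real \<Rightarrow> real" where
  "Fk b k t = (if k \<le> 0 then b powi (-k) / (1+b) * (b + (t + 1/2)*(1-b))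
               else 1 - b powi k / (1+b) * (b + (1/2 - t)*(1-b)))"

lemma Fk_step:
  assumes "0 < b"
  shows "Fk b (k+1) (-1/2) = Fk b k (1/2)"
proof -
  have bne: "b \<noteq> 0" using assms by simp
  consider "k + 1 \<le> 0" | "k = 0" | "k > 0" by linarith
  then show ?thesis
  proof cases
    case 1
    have e: "-k = 1 + (-(k+1))" by simp
    have "b powi (-k) = b * b powi (-(k+1))" using bne
      by (subst e, subst power_int_add) auto
    with 1 show ?thesis unfolding Fk_def by (simp add: field_simps)
  next
    case 2
    then show ?thesis unfolding Fk_def using assms by (simp add: field_simps)
  next
    case 3
    then have "b powi (k+1) = b * b powi k" using bne
      by (simp add: power_int_add algebra_simps)
    with 3 show ?thesis unfolding Fk_def using assms by (simp add: field_simps)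
  qed
qed

lemma Fk_consistent:
  assumes "0 < b" "\<bar>y - of_int j\<bar> \<le> 1/2" "\<bar>y - of_int k\<bar> \<le> 1/2"
  shows "Fk b j (y - of_int j) = Fk b k (y - of_int k)"
proof -
  have "j = k \<or> j = k + 1 \<or> k = j + 1"
  proof -
    have "\<bar>of_int j - of_int k :: real\<bar> \<le> 1" using assms by linarith
    then have "\<bar>j - k\<bar> \<le> 1" by linarith
    then show ?thesis by linarith
  qed
  then show ?thesis
  proof (elim disjE)
    assume jk: "j = k + 1"
    then have e1: "y - of_int k = 1/2" and e2: "y - of_int j = -1/2" using assms by auto
    have "Fk b j (y - of_int j) = Fk b (k+1) (-1/2)" "Fk b k (y - of_int k) = Fk b k (1/2)"
      by (subst e2, subst jk, rule refl) (subst e1, rule refl)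
    then show ?thesis using Fk_step[OF assms(1), of k] by simp
  next
    assume jk: "k = j + 1"
    then have e1: "y - of_int j = 1/2" and e2: "y - of_int k = -1/2" using assms by auto
    have "Fk b j (y - of_int j) = Fk b j (1/2)" "Fk b k (y - of_int k) = Fk b (j+1) (-1/2)"
      by (subst e1, rule refl) (subst e2, subst jk, rule refl)
    then show ?thesis using Fk_step[OF assms(1), of j] by simp
  qed simp
qed

lemma F0_Fk_nint:
  assumes "0 < b"
  shows "tulap0_cdf m b (m + y) = Fk b (nint y) (y - of_int (nint y))"
proof (cases "m + y \<le> of_int (nint m)")
  case True
  have "nint y \<le> 0"
  proof (rule ccontr)
    assume "\<not> nint y \<le> 0"
    have a: "y \<le> 1/2" using True nint_close[of m] by linarith
    have b: "y \<ge> of_int (nint y) - 1/2" using nint_close[of y] by linarith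
    from \<open>\<not> nint y \<le> 0\<close> have "of_int (nint y) \<ge> (1::real)" by simp
    with a b have "y = 1/2" "nint y = 1" by linarith+
    then show False using nint_half by (metis zero_neq_one)
  qed
  then show ?thesis using True unfolding tulap0_cdf_def Fk_def by simp
next
  case False
  have "nint y \<ge> 0"
  proof (rule ccontr)
    assume "\<not> nint y \<ge> 0"
    have a: "y > -1/2" using False nint_close[of m] by linarith
    have b: "y \<le> of_int (nint y) + 1/2" using nint_close[of y] by linarith
    from \<open>\<not> nint y \<ge> 0\<close> have "of_int (nint y) \<le> (-1::real)" by simp
    with a b show False by linarith
  qed
  show ?thesis
  proof (cases "nint y = 0")
    case True
    then show ?thesis using False unfolding tulap0_cdf_def Fk_def using assms
      by (simp add: field_simps)
  next
    case f2: False
    then show ?thesis using False \<open>nint y \<ge> 0\<close> unfolding tulap0_cdf_def Fk_def by simp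
  qed
qed

lemma F0_Fk:
  assumes "0 < b" "\<bar>y - of_int k\<bar> \<le> 1/2"
  shows "tulap0_cdf m b (m + y) = Fk b k (y - of_int k)"
  using F0_Fk_nint[OF assms(1)] Fk_consistent[OF assms(1) nint_close assms(2)] by simp

definition diffp :: "real \<Rightarrow> int pmf" where
  "diffp b = map_pmf (\<lambda>(i,j). int i - int j) (pair_pmf (geom_pmf b) (geom_pmf b))"

lemma pmf_geom: "0 < b \<Longrightarrow> b < 1 \<Longrightarrow> pmf (geom_pmf b) n = b ^ n * (1 - b)"
  unfolding geom_pmf_def by simp

lemma pmf_diffp_nonneg:
  assumes b: "0 < b" "b < 1" and k: "0 \<le> k"
  shows "pmf (diffp b) k = (1 - b) / (1 + b) * b ^ nat k"
proof -
  define n where "n = nat k"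
  define g where "g = (\<lambda>j::nat. (j + n, j))"
  have bij: "bij_betw g UNIV ((\<lambda>(i,j). int i - int j) -` {k})"
    unfolding bij_betw_def inj_on_def g_def n_def using k
    by (auto simp: image_iff intro!: exI[of _ "snd _"])
  have "pmf (diffp b) k = measure (measure_pmf (pair_pmf (geom_pmf b) (geom_pmf b))) ((\<lambda>(i,j). int i - int j) -` {k})"
    unfolding diffp_def pmf_map ..
  also have "\<dots> = infsetsum (pmf (pair_pmf (geom_pmf b) (geom_pmf b))) ((\<lambda>(i,j). int i - int j) -` {k})"
    by (rule measure_pmf_conv_infsetsum)
  also have "\<dots> = infsetsum (\<lambda>j. pmf (pair_pmf (geom_pmf b) (geom_pmf b)) (g j)) UNIV"
    by (rule infsetsum_reindex_bij_betw[OF bij, symmetric])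
  also have "\<dots> = infsetsum (\<lambda>j. (1-b)^2 * b^n * (b^2)^j) UNIV"
    unfolding g_def pmf_pair using b
    by (intro infsetsum_cong) (auto simp: pmf_geom power_add power_mult_distrib power2_eq_square mult_ac)
  also have "\<dots> = (\<Sum>j. (1-b)^2 * b^n * (b^2)^j)"
  proof (rule infsetsum_nat')
    have "summable (\<lambda>j. (1-b)^2 * b^n * (b^2)^j)"
      using b by (intro summable_mult summable_geometric) (simp add: abs_less_iff power_less_one_iff)
    then show "Infinite_Set_Sum.abs_summable_on (\<lambda>j. (1-b)^2 * b^n * (b^2)^j) UNIV"
      using b by (subst abs_summable_on_nat_iff') simp
  qed
  also have "\<dots> = (1-b)^2 * b^n * (1 / (1 - b^2))"
    using b by (intro sums_unique[symmetric] sums_mult geometric_sums) (simp add: abs_less_iff power_less_one_iff)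
  also have "\<dots> = (1 - b) / (1 + b) * b ^ nat k"
  proof -
    have h: "1 - b^2 = (1-b)*(1+b)" by (simp add: power2_eq_square algebra_simps)
    have "1 - b \<noteq> 0" "1 + b \<noteq> 0" using b by auto
    then show ?thesis unfolding h n_def by (simp add: power2_eq_square)
  qed
  finally show ?thesis .
qed

lemma diffp_sym: "pmf (diffp b) (-k) = pmf (diffp b) k"
proof -
  have "pmf (diffp b) (-k) = measure (measure_pmf (map_pmf (\<lambda>(x, y). (y, x)) (pair_pmf (geom_pmf b) (geom_pmf b)))) ((\<lambda>(i,j). int i - int j) -` {-k})"
    unfolding diffp_def pmf_map by (subst pair_commute_pmf) simp
  also have "\<dots> = measure (measure_pmf (pair_pmf (geom_pmf b) (geom_pmf b))) ((\<lambda>(i,j). int i - int j) -` {k})"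
    by (simp add: vimage_def case_prod_unfold) (intro arg_cong[where f="measure _"]; auto)
  finally show ?thesis unfolding diffp_def pmf_map .
qed

lemma pmf_diffp:
  assumes b: "0 < b" "b < 1"
  shows "pmf (diffp b) k = (1 - b) / (1 + b) * b ^ nat \<bar>k\<bar>"
proof (cases "0 \<le> k")
  case True then show ?thesis using pmf_diffp_nonneg[OF b True] by simp
next
  case False
  then have "pmf (diffp b) k = pmf (diffp b) (-k)" using diffp_sym[of b "-k"] by simp
  also have "\<dots> = (1 - b) / (1 + b) * b ^ nat \<bar>k\<bar>" using pmf_diffp_nonneg[OF b, of "-k"] False by simp
  finally show ?thesis .
qed

lemma dlap_eq:
  assumes b: "0 < b" "b < 1"
  shows "dlap_pmf b = diffp b"
proof -
  have e: "(\<lambda>x. (1 - b) / (1 + b) * b ^ nat \<bar>x\<bar>) = pmf (diffp b)"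
    using pmf_diffp[OF b] by auto
  show ?thesis unfolding dlap_pmf_def e
    by (rule pmf_eqI) (simp add: pmf_embed_pmf measure_pmf.emeasure_space_1[symmetric] nn_integral_pmf
       del: measure_pmf.emeasure_space_1)
qed

lemma prob_U: "prob_space unif_half"
  unfolding unif_half_def by (rule prob_space_uniform_measure) auto

lemma sets_U[measurable_cong]: "sets unif_half = sets borel"
  unfolding unif_half_def by simp

lemma emeasure_U: "S \<in> sets borel \<Longrightarrow> emeasure unif_half S = emeasure lborel ({-1/2<..<1/2} \<inter> S)"
  unfolding unif_half_def by (simp add: divide_ennreal_def)

lemma emeasure_U_le: "emeasure unif_half {..s} = ennreal (max 0 (min 1 (s + 1/2)))"
proof -
  have "emeasure unif_half {..s} = emeasure lborel ({-1/2<..<1/2} \<inter> {..s})"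
    by (rule emeasure_U) simp
  also have "\<dots> = ennreal (max 0 (min 1 (s + 1/2)))"
  proof (cases "s \<le> -1/2")
    case True
    then have "{-1/2<..<1/2} \<inter> {..s} = {}" by auto
    then show ?thesis using True by simp
  next
    case False
    show ?thesis
    proof (cases "s < 1/2")
      case True
      then have "{-1/2<..<1/2} \<inter> {..s} = {-1/2<..s}" by auto
      then show ?thesis using True False by simp
    next
      case f2: False
      then have "{-1/2<..<1/2} \<inter> {..s} = {-1/2<..<1/2}" by auto
      then show ?thesis using f2 by simp
    qed
  qed
  finally show ?thesis .
qed

lemma emeasure_U_sing: "emeasure unif_half {s} = 0"
  by (subst emeasure_U) (auto intro: emeasure_mono_AE[THEN antisym] simp: Int_def
      intro!: antisym[OF order.trans[OF emeasure_mono emeasure_lborel_singleton[of s, THEN eq_refl]]])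

lemma sigma_finite_U: "sigma_finite_measure unif_half"
proof -
  interpret prob_space unif_half by (rule prob_U)
  show ?thesis by unfold_locales
qed

lemma meas_f1[measurable]: "(\<lambda>(l, u). real_of_int l + u + m) \<in> borel_measurable (measure_pmf D \<Otimes>\<^sub>M unif_half)"
  by measurable

lemma meas_f2[measurable]: "(\<lambda>(g1, g2, u). real g1 - real g2 + u + m) \<in> borel_measurable (trial_measure b)"
  unfolding trial_measure_def by measurable

lemma emeasure_distr1:
  assumes S: "S \<in> sets borel"
  shows "emeasure (distr (measure_pmf D \<Otimes>\<^sub>M unif_half) borel (\<lambda>(l, u). real_of_int l + u + m)) S
       = (\<integral>\<^sup>+ l. emeasure unif_half {u. real_of_int l + u + m \<in> S} \<partial>measure_pmf D)"
proof -
  interpret U: sigma_finite_measure unif_half by (rule sigma_finite_U)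
  have A: "(\<lambda>(l, u). real_of_int l + u + m) -` S \<inter> space (measure_pmf D \<Otimes>\<^sub>M unif_half) \<in> sets (measure_pmf D \<Otimes>\<^sub>M unif_half)"
    using S by measurable
  show ?thesis
    using S
    apply (subst emeasure_distr, simp, simp)
    apply (subst U.emeasure_pair_measure_alt[OF A])
    apply (intro nn_integral_cong arg_cong[where f="emeasure unif_half"])
    apply (auto simp: space_pair_measure sets_eq_imp_space_eq[OF sets_U])
    done
qed

lemma emeasure_distr2:
  assumes S: "S \<in> sets borel"
  shows "emeasure (distr (trial_measure b) borel (\<lambda>(g1, g2, u). real g1 - real g2 + u + m)) S
       = (\<integral>\<^sup>+ g1. \<integral>\<^sup>+ g2. emeasure unif_half {u. real g1 - real g2 + u + m \<in> S} \<partial>measure_pmf (geom_pmf b) \<partial>measure_pmf (geom_pmf b))"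
proof -
  interpret U: sigma_finite_measure unif_half by (rule sigma_finite_U)
  interpret GU: sigma_finite_measure "measure_pmf (geom_pmf b) \<Otimes>\<^sub>M unif_half"
  proof -
    interpret pair_sigma_finite "measure_pmf (geom_pmf b)" unif_half
      by (intro pair_sigma_finite.intro sigma_finite_U) unfold_locales
    show "sigma_finite_measure (measure_pmf (geom_pmf b) \<Otimes>\<^sub>M unif_half)"
      by (rule sigma_finite_measure_axioms)
  qed
  have A: "(\<lambda>(g1, g2, u). real g1 - real g2 + u + m) -` S \<inter> space (trial_measure b) \<in> sets (trial_measure b)"
    using S unfolding trial_measure_def by measurable
  have B: "\<And>g1. Pair g1 -` ((\<lambda>(g1, g2, u). real g1 - real g2 + u + m) -` S \<inter> space (trial_measure b))
      \<in> sets (measure_pmf (geom_pmf b) \<Otimes>\<^sub>M unif_half)"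
    using sets_Pair1[OF A[unfolded trial_measure_def]] by (simp add: trial_measure_def)
  show ?thesis
    using S
    apply (subst emeasure_distr, simp, simp)
    unfolding trial_measure_def
    apply (subst GU.emeasure_pair_measure_alt)
    using A apply (simp add: trial_measure_def)
    apply (intro nn_integral_cong)
    apply (subst U.emeasure_pair_measure_alt)
    using B apply (simp add: trial_measure_def)
    apply (intro nn_integral_cong arg_cong[where f="emeasure unif_half"])
    apply (auto simp: space_pair_measure sets_eq_imp_space_eq[OF sets_U])
    done
qed

lemma distr_eq:
  assumes b: "0 < b" "b < 1"
  shows "distr (trial_measure b) borel (\<lambda>(g1, g2, u). real g1 - real g2 + u + m)
       = distr (measure_pmf (dlap_pmf b) \<Otimes>\<^sub>M unif_half) borel (\<lambda>(l, u). real_of_int l + u + m)"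
proof (rule measure_eqI)
  fix S assume S: "S \<in> sets (distr (trial_measure b) borel (\<lambda>(g1, g2, u). real g1 - real g2 + u + m))"
  then have S': "S \<in> sets borel" by simp
  show "emeasure (distr (trial_measure b) borel (\<lambda>(g1, g2, u). real g1 - real g2 + u + m)) S =
        emeasure (distr (measure_pmf (dlap_pmf b) \<Otimes>\<^sub>M unif_half) borel (\<lambda>(l, u). real_of_int l + u + m)) S"
    unfolding emeasure_distr1[OF S'] emeasure_distr2[OF S'] dlap_eq[OF b] diffp_def
    by (simp add: nn_integral_pair_pmf' case_prod_unfold)
qed simp

lemma measure_D_Suc:
  "measure (measure_pmf D) {..(j::int)} = measure (measure_pmf D) {..j-1} + pmf D j"
proof -
  have e: "{..j} = {..j-1} \<union> {j}" by auto
  have "measure (measure_pmf D) ({..j-1} \<union> {j}) = measure (measure_pmf D) {..j-1} + measure (measure_pmf D) {j}"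
    by (rule measure_pmf.finite_measure_Union) auto
  then show ?thesis unfolding e by (simp add: pmf.rep_eq)
qed

lemma neg_int_Suc: "(i::int) < 0 \<Longrightarrow> \<exists>n. i = - int (Suc n)"
  by presburger
lemma pos_int_Suc: "(i::int) > 0 \<Longrightarrow> \<exists>n. i = int (Suc n)"
  by presburger

lemma alg1: "(1::real) + b \<noteq> 0 \<Longrightarrow> x/(1+b) = b*x/(1+b) + (1-b)/(1+b)*x"
proof -
  have "b*x/(1+b) + (1-b)/(1+b)*x = (b*x + (1-b)*x)/(1+b)" by (simp add: add_divide_distrib)
  also have "b*x + (1-b)*x = x" by (simp add: algebra_simps)
  finally show ?thesis by simp
qed

definition Cf :: "real \<Rightarrow> int \<Rightarrow> real" where
  "Cf b j = (if j < 0 then b ^ nat (-j) / (1+b) else 1 - b ^ nat (j+1) / (1+b))"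

lemma measure_dlap_base:
  assumes b: "0 < b" "b < 1"
  shows "measure (measure_pmf (dlap_pmf b)) {..-1} = b / (1+b)"
proof -
  let ?D = "measure_pmf (dlap_pmf b)"
  have p: "pmf (dlap_pmf b) k = (1 - b) / (1 + b) * b ^ nat \<bar>k\<bar>" for k
    using pmf_diffp[OF b] dlap_eq[OF b] by simp
  have sym: "measure ?D {..-1} = measure ?D {1..}"
  proof -
    have "measure ?D {1..} = infsetsum (pmf (dlap_pmf b)) {1..}"
      by (rule measure_pmf_conv_infsetsum)
    also have "\<dots> = infsetsum (\<lambda>x. pmf (dlap_pmf b) (- x)) {..-1}"
      by (rule infsetsum_reindex_bij_betw[symmetric])
         (auto simp: bij_betw_def image_iff intro!: exI[of _ "- _"])
    also have "\<dots> = infsetsum (pmf (dlap_pmf b)) {..-1}"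
      by (intro infsetsum_cong) (simp_all add: p)
    also have "\<dots> = measure ?D {..-1}" by (rule measure_pmf_conv_infsetsum[symmetric])
    finally show ?thesis ..
  qed
  have "UNIV = {..-1} \<union> {0::int} \<union> {1..}" by auto
  then have "1 = measure ?D ({..-1} \<union> {0::int} \<union> {1..})" by simp
  also have "\<dots> = measure ?D {..-1} + pmf (dlap_pmf b) 0 + measure ?D {1..}"
  proof -
    have "measure ?D ({..-1} \<union> {0::int} \<union> {1..}) = measure ?D ({..-1} \<union> {0::int}) + measure ?D {1..}"
      by (rule measure_pmf.finite_measure_Union) auto
    moreover have "measure ?D ({..-1} \<union> {0::int}) = measure ?D {..-1} + measure ?D {0}"
      by (rule measure_pmf.finite_measure_Union) auto
    ultimately show ?thesis by (simp add: pmf.rep_eq)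
  qed
  finally have "1 = 2 * measure ?D {..-1} + (1-b)/(1+b)" using sym p[of 0] by simp
  then show ?thesis using b by (simp add: field_simps)
qed

lemma measure_dlap:
  assumes b: "0 < b" "b < 1"
  shows "measure (measure_pmf (dlap_pmf b)) {..j} = Cf b j"
proof -
  have p: "pmf (dlap_pmf b) k = (1 - b) / (1 + b) * b ^ nat \<bar>k\<bar>" for k
    using pmf_diffp[OF b] dlap_eq[OF b] by simp
  have bne: "b \<noteq> 0" "1 + b \<noteq> 0" using b by auto
  have step: "Cf b i = Cf b (i - 1) + (1 - b) / (1 + b) * b ^ nat \<bar>i\<bar>" for i
  proof -
    consider "i < 0" | "i = 0" | "i > 0" by linarith
    then show ?thesis
    proof cases
      case 1
      then obtain n where n: "i = - int (Suc n)" using neg_int_Suc by blast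
      have e1: "Cf b i = b ^ Suc n / (1+b)" unfolding Cf_def n by (simp add: nat_add_distrib)
      have e2: "Cf b (i - 1) = b ^ Suc (Suc n) / (1+b)" unfolding Cf_def n
        by (simp add: nat_add_distrib)
      have e3: "nat \<bar>i\<bar> = Suc n" unfolding n by simp
      show ?thesis unfolding e1 e2 e3 using alg1[OF bne(2), of "b ^ Suc n"] by simp
    next
      case 2 then show ?thesis unfolding Cf_def using bne by (simp add: field_simps)
    next
      case 3
      then obtain n where n: "i = int (Suc n)" using pos_int_Suc by blast
      have e1: "Cf b i = 1 - b ^ Suc (Suc n) / (1+b)" unfolding Cf_def n
        by (simp add: nat_add_distrib)
      have e2: "Cf b (i - 1) = 1 - b ^ Suc n / (1+b)" unfolding Cf_def n by (simp add: nat_add_distrib)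
      have e3: "nat \<bar>i\<bar> = Suc n" unfolding n by simp
      show ?thesis unfolding e1 e2 e3 using alg1[OF bne(2), of "b ^ Suc n"] by simp
    qed
  qed
  show ?thesis
  proof (induction j rule: int_induct[where k="-1"])
    case base
    then show ?case using measure_dlap_base[OF b] unfolding Cf_def by simp
  next
    case (step1 i)
    then show ?case using measure_D_Suc[of "dlap_pmf b" "i+1"] step[of "i+1"] p[of "i+1"] by simp
  next
    case (step2 i)
    then show ?case using measure_D_Suc[of "dlap_pmf b" "i"] step[of "i"] p[of "i"] by simp
  qed
qed

lemma clamp_decomp:
  assumes t: "\<bar>t\<bar> \<le> 1/2" and y: "y = of_int k + t"
  shows "ennreal (max 0 (min 1 (y - of_int l + 1/2)))
       = indicator {..k-1} l + ennreal (t + 1/2) * indicator {k} l"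
proof -
  consider "l \<le> k - 1" | "l = k" | "l \<ge> k + 1" by linarith
  then show ?thesis
  proof cases
    case 1
    then have "of_int l \<le> (of_int k - 1 :: real)" by linarith
    then have "max 0 (min 1 (y - of_int l + 1/2)) = 1" using t y by auto
    then show ?thesis using 1 by (simp add: indicator_def)
  next
    case 2
    then have "max 0 (min 1 (y - of_int l + 1/2)) = t + 1/2" using t y by auto
    then show ?thesis using 2 by (simp add: indicator_def)
  next
    case 3
    then have "of_int l \<ge> (of_int k + 1 :: real)" by linarith
    then have "max 0 (min 1 (y - of_int l + 1/2)) = 0" using t y by auto
    then show ?thesis using 3 by (simp add: indicator_def)
  qed
qed

lemma alg2: "(d::real) \<noteq> 0 \<Longrightarrow> A = b * B \<Longrightarrow> A/d + c*(e/d*B) = B/d*(b + c*e)"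
  by (simp add: field_simps)

lemma alg3: "(d::real) \<noteq> 0 \<Longrightarrow> 1 - B/d + (t + 1/2)*((1-b)/d*B) = 1 - B/d*(b + (1/2 - t)*(1-b))"
  by (simp add: field_simps)

lemma Cf_Fk:
  assumes b: "0 < b" "b < 1"
  shows "Cf b (k - 1) + (t + 1/2) * ((1 - b) / (1 + b) * b ^ nat \<bar>k\<bar>) = Fk b k t"
proof (cases "k \<le> 0")
  case True
  then obtain n where n: "k = - int n" by (metis add.inverse_inverse nonneg_int_cases neg_0_le_iff_le)
  have e1: "Cf b (k - 1) = b ^ Suc n / (1+b)" unfolding Cf_def n by (simp add: nat_add_distrib)
  have e2: "Fk b k t = b ^ n / (1+b) * (b + (t + 1/2)*(1-b))" unfolding Fk_def n by simp
  have e3: "nat \<bar>k\<bar> = n" unfolding n by simp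
  show ?thesis unfolding e1 e2 e3 by (rule alg2) (use b in auto)
next
  case False
  then obtain n where n: "k = int n" by (metis nonneg_int_cases linorder_linear)
  have e1: "Cf b (k - 1) = 1 - b ^ n / (1+b)" using False unfolding Cf_def n by (simp add: nat_add_distrib)
  have e2: "Fk b k t = 1 - b ^ n / (1+b) * (b + (1/2 - t)*(1-b))" using False unfolding Fk_def n by simp
  have e3: "nat \<bar>k\<bar> = n" unfolding n by simp
  show ?thesis unfolding e1 e2 e3 by (rule alg3) (use b in auto)
qed

lemma cdf_mu1:
  assumes b: "0 < b" "b < 1"
  shows "cdf (distr (measure_pmf (dlap_pmf b) \<Otimes>\<^sub>M unif_half) borel (\<lambda>(l, u). real_of_int l + u + m)) x
         = tulap0_cdf m b x"
proof -
  let ?D = "dlap_pmf b"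
  define y where "y = x - m"
  define k where "k = nint y"
  define t where "t = y - of_int k"
  have t: "\<bar>t\<bar> \<le> 1/2" unfolding t_def k_def by (rule nint_close)
  have yk: "y = of_int k + t" unfolding t_def by simp
  have p: "pmf ?D k = (1 - b) / (1 + b) * b ^ nat \<bar>k\<bar>"
    using pmf_diffp[OF b] dlap_eq[OF b] by simp
  have set_eq: "\<And>l. {u. real_of_int l + u + m \<le> x} = {..y - of_int l}" unfolding y_def by auto
  have "emeasure (distr (measure_pmf ?D \<Otimes>\<^sub>M unif_half) borel (\<lambda>(l, u). real_of_int l + u + m)) {..x}
      = (\<integral>\<^sup>+ l. ennreal (max 0 (min 1 (y - of_int l + 1/2))) \<partial>measure_pmf ?D)"
    by (subst emeasure_distr1) (auto simp: set_eq emeasure_U_le)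
  also have "\<dots> = (\<integral>\<^sup>+ l. indicator {..k-1} l + ennreal (t + 1/2) * indicator {k} l \<partial>measure_pmf ?D)"
    by (intro nn_integral_cong clamp_decomp[OF t yk])
  also have "\<dots> = emeasure (measure_pmf ?D) {..k-1} + ennreal (t + 1/2) * emeasure (measure_pmf ?D) {k}"
    by (subst nn_integral_add) (auto simp: nn_integral_cmult)
  also have "\<dots> = ennreal (measure (measure_pmf ?D) {..k-1}) + ennreal (t + 1/2) * ennreal (pmf ?D k)"
    by (simp add: measure_pmf.emeasure_eq_measure pmf.rep_eq)
  also have "\<dots> = ennreal (measure (measure_pmf ?D) {..k-1} + (t + 1/2) * pmf ?D k)"
    using t by (simp add: ennreal_plus ennreal_mult)
  finally have E: "emeasure (distr (measure_pmf ?D \<Otimes>\<^sub>M unif_half) borel (\<lambda>(l, u). real_of_int l + u + m)) {..x}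
      = ennreal (measure (measure_pmf ?D) {..k-1} + (t + 1/2) * pmf ?D k)" .
  have "cdf (distr (measure_pmf ?D \<Otimes>\<^sub>M unif_half) borel (\<lambda>(l, u). real_of_int l + u + m)) x
      = measure (measure_pmf ?D) {..k-1} + (t + 1/2) * pmf ?D k"
  proof -
    have "cdf (distr (measure_pmf ?D \<Otimes>\<^sub>M unif_half) borel (\<lambda>(l, u). real_of_int l + u + m)) x
       = enn2real (emeasure (distr (measure_pmf ?D \<Otimes>\<^sub>M unif_half) borel (\<lambda>(l, u). real_of_int l + u + m)) {..x})"
      by (simp add: cdf_def measure_def)
    also have "\<dots> = measure (measure_pmf ?D) {..k-1} + (t + 1/2) * pmf ?D k"
      unfolding E using t by (intro enn2real_ennreal) auto
    finally show ?thesis .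
  qed
  also have "\<dots> = Fk b k t" unfolding measure_dlap[OF b] p by (rule Cf_Fk[OF b])
  also have "Fk b k t = tulap0_cdf m b x"
    using F0_Fk[OF b(1), of y k m] t unfolding t_def y_def by simp
  finally show ?thesis .
qed

definition mu1 :: "real \<Rightarrow> real \<Rightarrow> real measure" where
  "mu1 b m = distr (measure_pmf (dlap_pmf b) \<Otimes>\<^sub>M unif_half) borel (\<lambda>(l, u). real_of_int l + u + m)"

lemma prob_DU: "prob_space (measure_pmf D \<Otimes>\<^sub>M unif_half)"
proof -
  interpret U: prob_space unif_half by (rule prob_U)
  interpret pair_prob_space "measure_pmf D" unif_half by unfold_locales
  show ?thesis by (rule prob_space_axioms)
qed

lemma real_dist_mu1: "real_distribution (mu1 b m)"
proof -
  interpret prob_space "measure_pmf (dlap_pmf b) \<Otimes>\<^sub>M unif_half" by (rule prob_DU)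
  show ?thesis unfolding mu1_def by (intro real_distribution_distr) simp
qed

lemma cdf_mu1': "0 < b \<Longrightarrow> b < 1 \<Longrightarrow> cdf (mu1 b m) x = tulap0_cdf m b x"
  unfolding mu1_def by (rule cdf_mu1)

lemma mu1_atom: "measure (mu1 b m) {x} = 0"
proof -
  have "emeasure (mu1 b m) {x} = (\<integral>\<^sup>+ l. emeasure unif_half {u. real_of_int l + u + m \<in> {x}} \<partial>measure_pmf (dlap_pmf b))"
    unfolding mu1_def by (rule emeasure_distr1) simp
  also have "\<dots> = (\<integral>\<^sup>+ l. 0 \<partial>measure_pmf (dlap_pmf b))"
  proof (intro nn_integral_cong)
    fix l
    have "{u. real_of_int l + u + m \<in> {x}} = {x - m - real_of_int l}" by auto
    then show "emeasure unif_half {u. real_of_int l + u + m \<in> {x}} = 0" by (simp add: emeasure_U_sing)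
  qed
  finally show ?thesis by (simp add: measure_def)
qed

lemma F0_cont: "0 < b \<Longrightarrow> b < 1 \<Longrightarrow> isCont (tulap0_cdf m b) x"
proof -
  assume b: "0 < b" "b < 1"
  interpret real_distribution "mu1 b m" by (rule real_dist_mu1)
  have "isCont (cdf (mu1 b m)) x" using isCont_cdf mu1_atom by blast
  moreover have "cdf (mu1 b m) = tulap0_cdf m b" using cdf_mu1'[OF b] by auto
  ultimately show ?thesis by simp
qed

lemma F0_mono: "0 < b \<Longrightarrow> b < 1 \<Longrightarrow> x \<le> y \<Longrightarrow> tulap0_cdf m b x \<le> tulap0_cdf m b y"
proof -
  assume b: "0 < b" "b < 1" and xy: "x \<le> y"
  interpret real_distribution "mu1 b m" by (rule real_dist_mu1)
  show ?thesis using cdf_nondecreasing[OF xy] cdf_mu1'[OF b] by simp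
qed

lemma F0_bounds: "0 < b \<Longrightarrow> b < 1 \<Longrightarrow> 0 \<le> tulap0_cdf m b x \<and> tulap0_cdf m b x \<le> 1"
proof -
  assume b: "0 < b" "b < 1"
  interpret real_distribution "mu1 b m" by (rule real_dist_mu1)
  show ?thesis using cdf_nonneg[of x] cdf_bounded_prob[of x] cdf_mu1'[OF b] by simp
qed

lemma F0_lim_bot: "0 < b \<Longrightarrow> b < 1 \<Longrightarrow> (tulap0_cdf m b \<longlongrightarrow> 0) at_bot"
proof -
  assume b: "0 < b" "b < 1"
  interpret real_distribution "mu1 b m" by (rule real_dist_mu1)
  have "cdf (mu1 b m) = tulap0_cdf m b" using cdf_mu1'[OF b] by auto
  then show ?thesis using cdf_lim_at_bot by simp
qed

lemma F0_lim_top: "0 < b \<Longrightarrow> b < 1 \<Longrightarrow> (tulap0_cdf m b \<longlongrightarrow> 1) at_top"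
proof -
  assume b: "0 < b" "b < 1"
  interpret real_distribution "mu1 b m" by (rule real_dist_mu1)
  have "cdf (mu1 b m) = tulap0_cdf m b" using cdf_mu1'[OF b] by auto
  then show ?thesis using cdf_lim_at_top_prob by simp
qed

lemma Fk_strict:
  assumes b: "0 < b" "b < 1" and t: "t1 < t2"
  shows "Fk b k t1 < Fk b k t2"
proof (cases "k \<le> 0")
  case True
  have "b powi (-k) / (1+b) * (b + (t1 + 1/2)*(1-b)) < b powi (-k) / (1+b) * (b + (t2 + 1/2)*(1-b))"
    using b t by (intro mult_strict_left_mono) auto
  then show ?thesis using True unfolding Fk_def by simp
next
  case False
  have "b powi k / (1+b) * (b + (1/2 - t2)*(1-b)) < b powi k / (1+b) * (b + (1/2 - t1)*(1-b))"
    using b t by (intro mult_strict_left_mono) auto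
  then show ?thesis using False unfolding Fk_def by simp
qed

lemma F0_strict:
  assumes b: "0 < b" "b < 1" and xy: "x < y"
  shows "tulap0_cdf m b x < tulap0_cdf m b y"
proof -
  define k where "k = \<lfloor>x - m + 1/2\<rfloor>"
  have k1: "of_int k \<le> x - m + 1/2" "x - m + 1/2 < of_int k + 1" unfolding k_def by linarith+
  define z where "z = min y (m + of_int k + 1/2)"
  have xz: "x < z" "z \<le> y" unfolding z_def using xy k1 by auto
  have zle: "z \<le> m + of_int k + 1/2" unfolding z_def by simp
  have "tulap0_cdf m b (m + (x - m)) = Fk b k (x - m - of_int k)"
    by (rule F0_Fk[OF b(1)]) (insert k1, unfold abs_le_iff, linarith)
  then have "tulap0_cdf m b x = Fk b k (x - m - of_int k)" by simp
  also have "\<dots> < Fk b k (z - m - of_int k)" using Fk_strict[OF b] xz by simp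
  also have "\<dots> = tulap0_cdf m b (m + (z - m))"
    by (rule F0_Fk[OF b(1), symmetric]) (insert k1 xz zle, unfold abs_le_iff, linarith)
  also have "\<dots> \<le> tulap0_cdf m b y" using F0_mono[OF b xz(2), of m] by simp
  finally show ?thesis .
qed

lemma F0_sym:
  assumes b: "0 < b" "b < 1"
  shows "tulap0_cdf m b (2*m - x) = 1 - tulap0_cdf m b x"
proof -
  define y where "y = x - m"
  define k where "k = nint y"
  define t where "t = y - of_int k"
  have t: "\<bar>t\<bar> \<le> 1/2" unfolding t_def k_def by (rule nint_close)
  have A: "tulap0_cdf m b x = Fk b k t" using F0_Fk[OF b(1), of y k m] t unfolding t_def y_def by simp
  have "tulap0_cdf m b (m + (-y)) = Fk b (-k) (-y - of_int (-k))"
    by (rule F0_Fk[OF b(1)]) (insert t, unfold abs_le_iff t_def, linarith)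
  moreover have "m + (-y) = 2*m - x" "-y - of_int (-k) = -t" unfolding t_def y_def by simp_all
  ultimately have "tulap0_cdf m b (2*m - x) = Fk b (-k) (-t)" by metis
  moreover have "Fk b (-k) (-t) = 1 - Fk b k t"
  proof -
    consider "k < 0" | "k = 0" | "k > 0" by linarith
    then show ?thesis
    proof cases
      case 1 then show ?thesis unfolding Fk_def by (simp add: algebra_simps)
    next
      case 2 then show ?thesis unfolding Fk_def using b by (simp add: field_simps)
    next
      case 3 then show ?thesis unfolding Fk_def by (simp add: algebra_simps)
    qed
  qed
  ultimately show ?thesis using A by simp
qed

definition Gq :: "real \<Rightarrow> real \<Rightarrow> real" where
  "Gq q s = max 0 (min 1 ((s - q/2)/(1-q)))"

lemma tulap_Gq:
  assumes q: "0 \<le> q" "q < 1"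
  shows "tulap_cdf m b q x = Gq q (tulap0_cdf m b x)"
proof -
  define s where "s = tulap0_cdf m b x"
  have d: "0 < 1 - q" using q by simp
  consider "q/2 \<le> s \<and> s \<le> 1 - q/2" | "s > 1 - q/2" | "s < q/2" by linarith
  then show ?thesis
  proof cases
    case 1
    then have "0 \<le> (s - q/2)/(1-q)" "(s - q/2)/(1-q) \<le> 1" using d by (simp_all add: field_simps)
    then show ?thesis using 1 unfolding tulap_cdf_def Gq_def s_def[symmetric] Let_def by simp
  next
    case 2
    then have "(s - q/2)/(1-q) > 1" using d by (simp add: field_simps)
    then show ?thesis using 2 q unfolding tulap_cdf_def Gq_def s_def[symmetric] Let_def by simp
  next
    case 3
    then have "(s - q/2)/(1-q) < 0" using d by (simp add: field_simps)
    then show ?thesis using 3 q unfolding tulap_cdf_def Gq_def s_def[symmetric] Let_def by simp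
  qed
qed

lemma Gq_sym: "q < 1 \<Longrightarrow> Gq q (1 - s) = 1 - Gq q s"
proof -
  assume q: "q < 1"
  have "((1 - s) - q/2)/(1-q) = 1 - (s - q/2)/(1-q)" using q by (simp add: field_simps)
  then show ?thesis unfolding Gq_def by simp
qed

lemma tulap_cont:
  assumes b: "0 < b" "b < 1" and q: "0 \<le> q" "q < 1"
  shows "isCont (tulap_cdf m b q) x"
proof -
  have e: "tulap_cdf m b q = (\<lambda>x. Gq q (tulap0_cdf m b x))" using tulap_Gq[OF q] by auto
  show ?thesis unfolding e Gq_def
    by (intro continuous_intros F0_cont[OF b]) (use q in auto)
qed

lemma tulap_sym:
  assumes b: "0 < b" "b < 1" and q: "0 \<le> q" "q < 1"
  shows "tulap_cdf m b q (2*m - x) = 1 - tulap_cdf m b q x"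
  using tulap_Gq[OF q] F0_sym[OF b] Gq_sym[of q] q by simp

lemma cdf_reflect:
  assumes "real_distribution \<nu>" and atom: "\<And>x. measure \<nu> {x} = 0"
  shows "cdf (distr \<nu> borel (\<lambda>y. c - y)) x = 1 - cdf \<nu> (c - x)"
proof -
  interpret real_distribution \<nu> by fact
  have "cdf (distr \<nu> borel (\<lambda>y. c - y)) x = measure \<nu> ((\<lambda>y. c - y) -` {..x})"
    unfolding cdf_def by (subst measure_distr) auto
  also have "(\<lambda>y. c - y) -` {..x} = UNIV - {..<c - x}" by auto
  also have "measure \<nu> (UNIV - {..<c - x}) = 1 - measure \<nu> {..<c - x}"
    using prob_compl[of "{..<c-x}"] by simp
  also have "measure \<nu> {..<c - x} = measure \<nu> {..c - x}"
  proof -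
    have e: "{..c - x} = {..<c-x} \<union> {c - x}" by auto
    have "measure \<nu> ({..<c-x} \<union> {c - x}) = measure \<nu> {..<c-x} + measure \<nu> {c - x}"
      by (rule finite_measure_Union) auto
    then have "measure \<nu> {..c - x} = measure \<nu> {..<c-x} + measure \<nu> {c - x}" unfolding e .
    then show ?thesis using atom by simp
  qed
  finally show ?thesis unfolding cdf_def .
qed

lemma part3:
  assumes b: "0 < b" "b < 1" and q: "0 \<le> q" "q < 1"
  assumes M: "prob_space M" and N: "N \<in> borel_measurable M"
    and c: "\<forall>x. cdf (distr M borel N) x = tulap_cdf m b q x"
  shows "(\<forall>x. isCont (cdf (distr M borel N)) x) \<and>
         distr M borel N = distr M borel (\<lambda>\<omega>. 2 * m - N \<omega>)"
proof
  interpret prob_space M by fact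
  have ce: "cdf (distr M borel N) = tulap_cdf m b q" using c by auto
  show cont: "\<forall>x. isCont (cdf (distr M borel N)) x" unfolding ce using tulap_cont[OF b q] by auto
  have rd: "real_distribution (distr M borel N)" using N by simp
  have atom: "measure (distr M borel N) {x} = 0" for x
    using cont finite_borel_measure.isCont_cdf[OF real_distribution.finite_borel_measure_M[OF rd]] by blast
  have rd2: "real_distribution (distr M borel (\<lambda>\<omega>. 2 * m - N \<omega>))" using N by simp
  have e2: "distr M borel (\<lambda>\<omega>. 2 * m - N \<omega>) = distr (distr M borel N) borel (\<lambda>y. 2 * m - y)"
    using N by (subst distr_distr) (auto simp: comp_def)
  show "distr M borel N = distr M borel (\<lambda>\<omega>. 2 * m - N \<omega>)"
  proof (rule cdf_unique[OF rd rd2], rule ext)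
    fix x
    show "cdf (distr M borel N) x = cdf (distr M borel (\<lambda>\<omega>. 2 * m - N \<omega>)) x"
      unfolding e2 cdf_reflect[OF rd atom] ce using tulap_sym[OF b q, of m "x"] by simp
  qed
qed

lemma F0_hits:
  assumes b: "0 < b" "b < 1" and v: "0 < v" "v < 1"
  shows "\<exists>a. tulap0_cdf m b a = v"
proof -
  have "eventually (\<lambda>y. tulap0_cdf m b y < v) at_bot"
    using order_tendstoD(2)[OF F0_lim_bot[OF b] v(1)] .
  then obtain lo where lo: "\<And>y. y \<le> lo \<Longrightarrow> tulap0_cdf m b y < v"
    unfolding eventually_at_bot_linorder by blast
  have "eventually (\<lambda>y. tulap0_cdf m b y > v) at_top"
    using order_tendstoD(1)[OF F0_lim_top[OF b] v(2)] .
  then obtain hi where hi: "\<And>y. y \<ge> hi \<Longrightarrow> tulap0_cdf m b y > v"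
    unfolding eventually_at_top_linorder by blast
  define hi' where "hi' = max hi lo"
  have "\<exists>x. lo \<le> x \<and> x \<le> hi' \<and> tulap0_cdf m b x = v"
    using lo[of lo] hi[of hi'] unfolding hi'_def
    by (intro IVT' continuous_at_imp_continuous_on ballI F0_cont[OF b]) auto
  then show ?thesis by blast
qed

lemma F0_le_iff:
  assumes b: "0 < b" "b < 1"
  shows "tulap0_cdf m b x \<le> tulap0_cdf m b y \<longleftrightarrow> x \<le> y"
  using F0_strict[OF b, of y x m] F0_mono[OF b, of x y m] by (cases "x \<le> y") auto

lemma measure_Icc_mu1:
  assumes b: "0 < b" "b < 1" and az: "a \<le> z"
  shows "measure (mu1 b m) {a..z} = tulap0_cdf m b z - tulap0_cdf m b a"
proof -
  interpret real_distribution "mu1 b m" by (rule real_dist_mu1)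
  have e: "{a..z} = {a} \<union> {a<..z}" using az by auto
  have "measure (mu1 b m) ({a} \<union> {a<..z}) = measure (mu1 b m) {a} + measure (mu1 b m) {a<..z}"
    by (rule finite_measure_Union) auto
  also have "measure (mu1 b m) {a<..z} = cdf (mu1 b m) z - cdf (mu1 b m) a"
  proof (cases "a < z")
    case True then show ?thesis using cdf_diff_eq by simp
  next
    case False then have "a = z" using az by simp
    then show ?thesis by simp
  qed
  finally show ?thesis unfolding e mu1_atom cdf_mu1'[OF b] by simp
qed

definition AccS :: "real \<Rightarrow> real \<Rightarrow> real \<Rightarrow> real set" where
  "AccS m b q = {y. q/2 \<le> tulap0_cdf m b y \<and> tulap0_cdf m b y \<le> 1 - q/2}"

lemma AccS_borel: "0 < b \<Longrightarrow> b < 1 \<Longrightarrow> AccS m b q \<in> sets borel"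
proof -
  assume b: "0 < b" "b < 1"
  have [measurable]: "tulap0_cdf m b \<in> borel_measurable borel"
    by (intro borel_measurable_continuous_onI continuous_at_imp_continuous_on ballI F0_cont[OF b])
  show ?thesis unfolding AccS_def by measurable
qed

lemma acc_measure:
  assumes b: "0 < b" "b < 1" and q: "0 \<le> q" "q < 1"
  shows "measure (mu1 b m) (AccS m b q \<inter> {..x}) = (1 - q) * Gq q (tulap0_cdf m b x)"
    and "measure (mu1 b m) (AccS m b q) = 1 - q"
proof -
  interpret real_distribution "mu1 b m" by (rule real_dist_mu1)
  let ?F = "tulap0_cdf m b"
  have "measure (mu1 b m) (AccS m b q \<inter> {..x}) = (1 - q) * Gq q (?F x) \<and>
        measure (mu1 b m) (AccS m b q) = 1 - q"
  proof (cases "q = 0")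
    case True
    then have A: "AccS m b q = UNIV" unfolding AccS_def using F0_bounds[OF b] by auto
    have "measure (mu1 b m) {..x} = ?F x" using cdf_mu1'[OF b] unfolding cdf_def by simp
    moreover have "Gq q (?F x) = ?F x" unfolding Gq_def True using F0_bounds[OF b, of m x] by simp
    ultimately show ?thesis unfolding A using True prob_space by simp
  next
    case False
    then have q0: "0 < q" using q by simp
    obtain a where a: "?F a = q/2" using F0_hits[OF b, of "q/2"] q0 q by auto
    obtain c where c: "?F c = 1 - q/2" using F0_hits[OF b, of "1 - q/2"] q0 q by auto
    have ac: "a \<le> c" using F0_le_iff[OF b, of m a c] a c q by simp
    have A: "AccS m b q = {a..c}"
      unfolding AccS_def using F0_le_iff[OF b, of m a] F0_le_iff[OF b, of m _ c] a c by auto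
    have d: "0 < 1 - q" using q by simp
    have P: "measure (mu1 b m) (AccS m b q) = 1 - q" unfolding A measure_Icc_mu1[OF b ac] a c by simp
    consider "x < a" | "a \<le> x" "x \<le> c" | "c < x" by linarith
    then show ?thesis
    proof cases
      case 1
      then have "AccS m b q \<inter> {..x} = {}" unfolding A by auto
      moreover have "?F x < q/2" using F0_strict[OF b 1, of m] a by simp
      then have "Gq q (?F x) = 0" unfolding Gq_def using d by (simp add: divide_le_0_iff)
      ultimately show ?thesis using P by simp
    next
      case 2
      then have "AccS m b q \<inter> {..x} = {a..x}" unfolding A by auto
      moreover have "q/2 \<le> ?F x" "?F x \<le> 1 - q/2"
        using F0_le_iff[OF b, of m a x] F0_le_iff[OF b, of m x c] 2 a c by auto
      then have "Gq q (?F x) = (?F x - q/2) / (1 - q)"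
        unfolding Gq_def using d by (simp add: field_simps)
      ultimately show ?thesis using P measure_Icc_mu1[OF b 2(1)] a d by simp
    next
      case 3
      then have "AccS m b q \<inter> {..x} = AccS m b q" unfolding A by auto
      moreover have "?F x > 1 - q/2" using F0_strict[OF b 3, of m] c by simp
      then have "Gq q (?F x) = 1" unfolding Gq_def using d by (simp add: field_simps)
      ultimately show ?thesis using P by simp
    qed
  qed
  then show "measure (mu1 b m) (AccS m b q \<inter> {..x}) = (1 - q) * Gq q (tulap0_cdf m b x)"
    and "measure (mu1 b m) (AccS m b q) = 1 - q" by auto
qed

lemma prod_split_last:
  "(\<Prod>j\<in>{..(k::nat)}. if j < k then a else c) = a ^ k * (c::real)"
proof -
  have "{..k} = insert k {..<k}" by auto
  then have "(\<Prod>j\<in>{..k}. if j < k then a else c) = c * (\<Prod>j\<in>{..<k}. if j < k then a else c)"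
    by simp
  also have "(\<Prod>j\<in>{..<k}. if j < k then a else c) = (\<Prod>j\<in>{..<k}. a)"
    by (rule prod.cong) auto
  finally show ?thesis by simp
qed

lemma part2:
  fixes m b q :: real and M :: "'a measure" and Z :: "nat \<Rightarrow> 'a \<Rightarrow> nat \<times> nat \<times> real"
  assumes b: "0 < b" "b < 1" and q: "0 \<le> q" "q < 1"
  assumes M: "prob_space M"
    and ind: "prob_space.indep_vars M (\<lambda>_. trial_measure b) Z UNIV"
    and dist: "\<forall>k. distr M (trial_measure b) (Z k) = trial_measure b"
  defines "f \<equiv> (\<lambda>(g1, g2, u). real g1 - real g2 + u + m)"
  defines "X \<equiv> (\<lambda>k \<omega>. f (Z k \<omega>))"
  defines "acc \<equiv> (\<lambda>k \<omega>. q/2 \<le> tulap0_cdf m b (X k \<omega>) \<and> tulap0_cdf m b (X k \<omega>) \<le> 1 - q/2)"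
  defines "N \<equiv> (\<lambda>\<omega>. X (LEAST k. acc k \<omega>) \<omega>)"
  shows "(AE \<omega> in M. \<exists>k. acc k \<omega>) \<and> (\<forall>x. cdf (distr M borel N) x = tulap_cdf m b q x)"
proof -
  interpret prob_space M by fact
  let ?T = "trial_measure b"
  let ?A = "AccS m b q"
  have Zm[measurable]: "Z k \<in> measurable M ?T" for k
    using ind unfolding indep_vars_def by auto
  have fm[measurable]: "f \<in> borel_measurable ?T" unfolding f_def by (rule meas_f2)
  have Xm[measurable]: "X k \<in> borel_measurable M" for k unfolding X_def by measurable
  have Aborel[measurable]: "?A \<in> sets borel" by (rule AccS_borel[OF b])
  have acc_iff: "acc k \<omega> \<longleftrightarrow> X k \<omega> \<in> ?A" for k \<omega> unfolding acc_def AccS_def by simp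
  have accm[measurable]: "Measurable.pred M (acc k)" for k
    unfolding acc_iff by measurable
  have Nm[measurable]: "N \<in> borel_measurable M"
    unfolding N_def
    by (rule measurable_compose_countable'[where I=UNIV]) (auto intro: measurable_Least)
  have distf: "distr ?T borel f = mu1 b m"
    unfolding f_def mu1_def by (rule distr_eq[OF b])
  have probZ: "prob (Z k -` B \<inter> space M) = measure ?T B" if "B \<in> sets ?T" for k B
    using that measure_distr[OF Zm[of k] that] dist by simp
  have measT: "measure ?T (f -` S \<inter> space ?T) = measure (mu1 b m) S" if "S \<in> sets borel" for S
    using measure_distr[OF fm, of S] that distf by simp
  define Rej where "Rej = f -` (- ?A) \<inter> space ?T"
  define AX where "AX x = f -` (?A \<inter> {..x}) \<inter> space ?T" for x
  have Rej_sets: "Rej \<in> sets ?T" unfolding Rej_def by measurable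
  have AX_sets: "AX x \<in> sets ?T" for x unfolding AX_def by measurable
  interpret mu: real_distribution "mu1 b m" by (rule real_dist_mu1)
  have mRej: "measure ?T Rej = q"
  proof -
    have "measure ?T Rej = measure (mu1 b m) (- ?A)" unfolding Rej_def by (rule measT) simp
    also have "\<dots> = 1 - measure (mu1 b m) ?A"
      using mu.prob_compl[of ?A] by (simp add: Compl_eq_Diff_UNIV)
    finally show ?thesis using acc_measure(2)[OF b q, of m] by simp
  qed
  have mAX: "measure ?T (AX x) = (1 - q) * Gq q (tulap0_cdf m b x)" for x
    unfolding AX_def by (subst measT) (auto simp: acc_measure(1)[OF b q])
  define B where "B k x j = (if j < k then Rej else AX x)" for k j :: nat and x
  define E where "E k x = (\<Inter>j\<in>{..k}. Z j -` B k x j \<inter> space M)" for k x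
  have Zsp: "\<omega> \<in> space M \<Longrightarrow> Z j \<omega> \<in> space ?T" for \<omega> j
    using measurable_space[OF Zm] by blast
  have E_iff: "\<omega> \<in> E k x \<longleftrightarrow> \<omega> \<in> space M \<and> (\<forall>j<k. \<not> acc j \<omega>) \<and> acc k \<omega> \<and> X k \<omega> \<le> x" for \<omega> k x
    unfolding E_def B_def Rej_def AX_def acc_iff X_def using Zsp by (auto split: if_splits)
  have E_sets: "E k x \<in> sets M" for k x
    unfolding E_def B_def using Rej_sets AX_sets by (intro sets.finite_INT) auto
  have probE: "prob (E k x) = q ^ k * ((1 - q) * Gq q (tulap0_cdf m b x))" for k x
  proof -
    have "prob (E k x) = (\<Prod>j\<in>{..k}. prob (Z j -` B k x j \<inter> space M))"
      unfolding E_def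
      by (rule indep_varsD[OF ind]) (auto simp: B_def Rej_sets AX_sets)
    also have "\<dots> = (\<Prod>j\<in>{..k}. if j < k then q else (1 - q) * Gq q (tulap0_cdf m b x))"
      by (rule prod.cong) (auto simp: probZ B_def Rej_sets AX_sets mRej mAX)
    finally show ?thesis by (simp add: prod_split_last)
  qed
  define Nev where "Nev = {\<omega>\<in>space M. \<forall>k. \<not> acc k \<omega>}"
  have Nev_sets: "Nev \<in> sets M" unfolding Nev_def by measurable
  have Nev_le: "prob Nev \<le> q ^ Suc n" for n
  proof -
    have "Nev \<subseteq> (\<Inter>j\<in>{..<Suc n}. Z j -` Rej \<inter> space M)"
      unfolding Nev_def Rej_def acc_iff X_def using Zsp by auto
    then have "prob Nev \<le> prob (\<Inter>j\<in>{..<Suc n}. Z j -` Rej \<inter> space M)"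
      using Rej_sets by (intro finite_measure_mono sets.finite_INT) auto
    also have "\<dots> = (\<Prod>j\<in>{..<Suc n}. prob (Z j -` Rej \<inter> space M))"
      by (rule indep_varsD[OF ind]) (auto simp: Rej_sets)
    also have "\<dots> = q ^ Suc n" using probZ[OF Rej_sets] mRej by simp
    finally show ?thesis .
  qed
  have Nev0: "prob Nev = 0"
  proof (rule ccontr)
    assume "prob Nev \<noteq> 0"
    then have pos: "prob Nev > 0" using measure_nonneg[of M Nev] by linarith
    have "(\<lambda>n. q ^ Suc n) \<longlonglongrightarrow> 0"
      by (rule LIMSEQ_Suc[OF LIMSEQ_power_zero]) (use q in simp)
    from order_tendstoD(2)[OF this pos] obtain n where "q ^ Suc n < prob Nev"
      by (auto simp: eventually_sequentially)
    then show False using Nev_le[of n] by simp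
  qed
  have AE_acc: "AE \<omega> in M. \<exists>k. acc k \<omega>"
  proof (subst AE_iff_measurable[OF Nev_sets])
    show "{\<omega> \<in> space M. \<not> (\<exists>k. acc k \<omega>)} = Nev" unfolding Nev_def by auto
    show "emeasure M Nev = 0" using Nev0 emeasure_eq_measure[of Nev] by simp
  qed
  have cdfN: "cdf (distr M borel N) x = tulap_cdf m b q x" for x
  proof -
    have "cdf (distr M borel N) x = prob (N -` {..x} \<inter> space M)"
      unfolding cdf_def by (subst measure_distr) auto
    also have "\<dots> = prob (\<Union>k. E k x)"
    proof (rule measure_eq_AE)
      show "AE \<omega> in M. (\<omega> \<in> N -` {..x} \<inter> space M) = (\<omega> \<in> (\<Union>k. E k x))"
        using AE_acc
      proof eventually_elim
        case (elim \<omega>)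
        define k where "k = (LEAST k. acc k \<omega>)"
        have ak: "acc k \<omega>" unfolding k_def using elim by (rule LeastI_ex)
        have nk: "\<forall>j<k. \<not> acc j \<omega>" unfolding k_def using not_less_Least by blast
        have Nk: "N \<omega> = X k \<omega>" unfolding N_def k_def ..
        have uniq: "k' = k" if "\<omega> \<in> E k' x" for k'
        proof -
          have h: "\<forall>j<k'. \<not> acc j \<omega>" "acc k' \<omega>" using that unfolding E_iff by auto
          have "\<not> k' < k" using h(2) nk by blast
          moreover have "\<not> k < k'" using h(1) ak by blast
          ultimately show "k' = k" by simp
        qed
        show ?case
        proof
          assume "\<omega> \<in> N -` {..x} \<inter> space M"
          then have "\<omega> \<in> E k x" using ak nk Nk unfolding E_iff by simp
          then show "\<omega> \<in> (\<Union>k. E k x)" by blast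
        next
          assume "\<omega> \<in> (\<Union>k. E k x)"
          then obtain k' where k': "\<omega> \<in> E k' x" by blast
          then have "k' = k" by (rule uniq)
          with k' show "\<omega> \<in> N -` {..x} \<inter> space M" using Nk unfolding E_iff by simp
        qed
      qed
      show "N -` {..x} \<inter> space M \<in> sets M" by measurable
      show "(\<Union>k. E k x) \<in> sets M" using E_sets by auto
    qed
    also have "\<dots> = (1 - q) * Gq q (tulap0_cdf m b x) * (1 / (1 - q))"
    proof (rule sums_unique2)
      show "(\<lambda>k. prob (E k x)) sums prob (\<Union>k. E k x)"
      proof (rule measure_UNION)
        show "range (\<lambda>k. E k x) \<subseteq> events" using E_sets by auto
        show "disjoint_family (\<lambda>k. E k x)"
          unfolding disjoint_family_on_def
        proof (intro ballI impI)
          fix i j :: nat assume "i \<noteq> j"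
          show "E i x \<inter> E j x = {}"
          proof (rule ccontr)
            assume "E i x \<inter> E j x \<noteq> {}"
            then obtain \<omega> where "\<omega> \<in> E i x" "\<omega> \<in> E j x" by blast
            then have h: "\<forall>l<i. \<not> acc l \<omega>" "acc i \<omega>" "\<forall>l<j. \<not> acc l \<omega>" "acc j \<omega>"
              unfolding E_iff by auto
            have "\<not> i < j" using h(2,3) by blast
            moreover have "\<not> j < i" using h(1,4) by blast
            ultimately show False using \<open>i \<noteq> j\<close> by simp
          qed
        qed
        show "emeasure M (\<Union>k. E k x) \<noteq> \<infinity>" by simp
      qed
      show "(\<lambda>k. prob (E k x)) sums ((1 - q) * Gq q (tulap0_cdf m b x) * (1 / (1 - q)))"
        unfolding probE using q
        by (subst mult.commute, intro sums_mult geometric_sums) auto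
    qed
    also have "\<dots> = Gq q (tulap0_cdf m b x)" using q by simp
    also have "\<dots> = tulap_cdf m b q x" using tulap_Gq[OF q] by simp
    finally show ?thesis .
  qed
  show ?thesis using AE_acc cdfN by blast
qed

theorem lemma1:
  fixes m b q :: real
  assumes "0 < b" "b < 1" "0 \<le> q" "q < 1"
  shows
   "(\<forall>x. cdf (distr (measure_pmf (dlap_pmf b) \<Otimes>\<^sub>M unif_half) borel
                 (\<lambda>(l, u). real_of_int l + u + m)) x = tulap0_cdf m b x)
  \<and> (\<forall>x. cdf (distr (trial_measure b) borel
                 (\<lambda>(g1, g2, u). real g1 - real g2 + u + m)) x = tulap0_cdf m b x)
  \<and> (\<forall>(M :: 'a measure) (Z :: nat \<Rightarrow> 'a \<Rightarrow> nat \<times> nat \<times> real).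
       prob_space M \<longrightarrow>
       prob_space.indep_vars M (\<lambda>_. trial_measure b) Z UNIV \<longrightarrow>
       (\<forall>k. distr M (trial_measure b) (Z k) = trial_measure b) \<longrightarrow>
       (let X = (\<lambda>k \<omega>. case Z k \<omega> of (g1, g2, u) \<Rightarrow> real g1 - real g2 + u + m);
            acc = (\<lambda>k \<omega>. q/2 \<le> tulap0_cdf m b (X k \<omega>) \<and> tulap0_cdf m b (X k \<omega>) \<le> 1 - q/2);
            N = (\<lambda>\<omega>. X (LEAST k. acc k \<omega>) \<omega>)
        in (AE \<omega> in M. \<exists>k. acc k \<omega>) \<and>
           (\<forall>x. cdf (distr M borel N) x = tulap_cdf m b q x)))
  \<and> (\<forall>(M :: 'b measure) (N :: 'b \<Rightarrow> real).
       prob_space M \<longrightarrow> N \<in> borel_measurable M \<longrightarrow>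
       (\<forall>x. cdf (distr M borel N) x = tulap_cdf m b q x) \<longrightarrow>
       (\<forall>x. isCont (cdf (distr M borel N)) x) \<and>
       distr M borel N = distr M borel (\<lambda>\<omega>. 2 * m - N \<omega>))"
proof -
  have b: "0 < b" "b < 1" and q: "0 \<le> q" "q < 1" using assms by auto
  have P1: "\<forall>x. cdf (distr (measure_pmf (dlap_pmf b) \<Otimes>\<^sub>M unif_half) borel
                 (\<lambda>(l, u). real_of_int l + u + m)) x = tulap0_cdf m b x"
    using cdf_mu1[OF b] by blast
  have P2: "\<forall>x. cdf (distr (trial_measure b) borel
                 (\<lambda>(g1, g2, u). real g1 - real g2 + u + m)) x = tulap0_cdf m b x"
    unfolding distr_eq[OF b] using cdf_mu1[OF b] by blast
  have P3: "\<forall>(M :: 'a measure) (Z :: nat \<Rightarrow> 'a \<Rightarrow> nat \<times> nat \<times> real).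
       prob_space M \<longrightarrow>
       prob_space.indep_vars M (\<lambda>_. trial_measure b) Z UNIV \<longrightarrow>
       (\<forall>k. distr M (trial_measure b) (Z k) = trial_measure b) \<longrightarrow>
       (let X = (\<lambda>k \<omega>. case Z k \<omega> of (g1, g2, u) \<Rightarrow> real g1 - real g2 + u + m);
            acc = (\<lambda>k \<omega>. q/2 \<le> tulap0_cdf m b (X k \<omega>) \<and> tulap0_cdf m b (X k \<omega>) \<le> 1 - q/2);
            N = (\<lambda>\<omega>. X (LEAST k. acc k \<omega>) \<omega>)
        in (AE \<omega> in M. \<exists>k. acc k \<omega>) \<and>
           (\<forall>x. cdf (distr M borel N) x = tulap_cdf m b q x))"
  proof (intro allI impI)
    fix M :: "'a measure" and Z :: "nat \<Rightarrow> 'a \<Rightarrow> nat \<times> nat \<times> real"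
    assume M: "prob_space M" and ind: "prob_space.indep_vars M (\<lambda>_. trial_measure b) Z UNIV"
      and dist: "\<forall>k. distr M (trial_measure b) (Z k) = trial_measure b"
    show "let X = (\<lambda>k \<omega>. case Z k \<omega> of (g1, g2, u) \<Rightarrow> real g1 - real g2 + u + m);
            acc = (\<lambda>k \<omega>. q/2 \<le> tulap0_cdf m b (X k \<omega>) \<and> tulap0_cdf m b (X k \<omega>) \<le> 1 - q/2);
            N = (\<lambda>\<omega>. X (LEAST k. acc k \<omega>) \<omega>)
        in (AE \<omega> in M. \<exists>k. acc k \<omega>) \<and>
           (\<forall>x. cdf (distr M borel N) x = tulap_cdf m b q x)"
      unfolding Let_def using part2[OF b q M ind dist, of m] by simp
  qed
  have P4: "\<forall>(M :: 'b measure) (N :: 'b \<Rightarrow> real).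
       prob_space M \<longrightarrow> N \<in> borel_measurable M \<longrightarrow>
       (\<forall>x. cdf (distr M borel N) x = tulap_cdf m b q x) \<longrightarrow>
       (\<forall>x. isCont (cdf (distr M borel N)) x) \<and>
       distr M borel N = distr M borel (\<lambda>\<omega>. 2 * m - N \<omega>)"
    using part3[OF b q] by blast
  show ?thesis by (intro conjI P1 P2 P3 P4)
qed

end
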